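(* Let $N\ge 2$ and consider the interconnected uncertain system with state $x=(x_{11},x_{12},x_{21},x_{22},\dots,x_{N1},x_{N2})\in\mathbb{R}^{2N}$, known input $u\in\mathbb{R}^m$, unknown input $w\in\mathbb{R}^N$ and measured output $y=(x_{11},x_{21},\dots,x_{N1})^\top\in\mathbb{R}^N$, given for $i=1,\dots,N$ by \[ \dot x_{i1}=f_{i1}(y,u,x_{12},\dots,x_{(i-1)2})+g_i(y,u,t)\,x_{i2},\qquad \dot x_{i2}=f_{i2}(x,u)+\delta_i(x,u,w,t), \] where $f_{11}=f_{11}(y,u)$ (no dependence on any $x_{j2}$), the $f_{i1}$ are known continuous functions, the $f_{i2}$ are known, possibly discontinuous or multivalued functions, the $\delta_i$ are unknown uncertainty terms, and the $g_i$ are known continuous functions satisfying $0<g_{i,m}\le g_i(y,u,t)\le g_{i,M}$ for some constants $g_{i,m},g_{i,M}$. Assume the system has solutions in the sense of Filippov. Then this system is globally strongly observable.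
   Context: A system with known input $u$, unknown input (here the uncertainty terms $\delta_i$), and output $y$ is called strongly observable if the state $x$ can be recovered from the known input $u$ and the measured output $y$ together with their time derivatives, regardless of the unknown input; it is globally strongly observable if this holds on the whole state space, i.e. the map $(x,u)\mapsto(y,\dot y,\dots)$ obtained from the output and its derivatives does not depend on the unknown input and is globally invertible in $x$ for every $u\in\mathbb{R}^m$. *)

theory Defs
  imports "HOL-Analysis.Analysis"
begin

text \<open>State x = (x1, x2) with x1 = (x_11,...,x_N1), x2 = (x_12,...,x_N2), indices in a
finite well-ordered type 'n with CARD('n) = N.  Output y = x1.\<close>

definition sys_rhs ::
  "('n::{finite,wellorder} \<Rightarrow> (real, 'n) vec \<Rightarrow> (real, 'm) vec \<Rightarrow> (real, 'n) vec \<Rightarrow> real)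
   \<Rightarrow> ('n \<Rightarrow> (real, 'n) vec \<times> (real, 'n) vec \<Rightarrow> (real, 'm) vec \<Rightarrow> real set)
   \<Rightarrow> ('n \<Rightarrow> (real, 'n) vec \<Rightarrow> (real, 'm) vec \<Rightarrow> real \<Rightarrow> real)
   \<Rightarrow> ('n \<Rightarrow> (real, 'n) vec \<times> (real, 'n) vec \<Rightarrow> (real, 'm) vec \<Rightarrow> (real, 'n) vec \<Rightarrow> real \<Rightarrow> real)
   \<Rightarrow> (real, 'n) vec \<times> (real, 'n) vec \<Rightarrow> (real, 'm) vec \<Rightarrow> (real, 'n) vec \<Rightarrow> real \<Rightarrow> ((real, 'n) vec \<times> (real, 'n) vec) set"
  where "sys_rhs f1 f2 g \<delta> x u w t =
    {(v1, v2). (\<forall>i. v1 $ i = f1 i (fst x) u (snd x) + g i (fst x) u t * (snd x $ i)) \<and>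
               (\<forall>i. v2 $ i \<in> (\<lambda>a. a + \<delta> i x u w t) ` f2 i x u)}"

text \<open>Global strong observability for a system with output y = fst x: the map
  (x,u,t) \<mapsto> (y, dy/dt) (where dy/dt = fst v for any admissible velocity v) is
  well defined independently of the unknown input w (and of the choice of v), and for
  every u (and t) it is a global bijection in x.\<close>
definition globally_strongly_observable ::
  "((real, 'n) vec \<times> (real, 'n) vec \<Rightarrow> (real, 'm) vec \<Rightarrow> (real, 'n) vec \<Rightarrow> real \<Rightarrow> ((real, 'n) vec \<times> (real, 'n) vec) set) \<Rightarrow> bool"
  where "globally_strongly_observable rhs \<longleftrightarrow>
    (\<exists>\<Phi> :: (real, 'n) vec \<times> (real, 'n) vec \<Rightarrow> (real, 'm) vec \<Rightarrow> real \<Rightarrow> (real, 'n) vec \<times> (real, 'n) vec.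
       (\<forall>x u w t v. v \<in> rhs x u w t \<longrightarrow> (fst x, fst v) = \<Phi> x u t) \<and>
       (\<forall>u t. bij (\<lambda>x. \<Phi> x u t)))"

end

theory Submission
  imports Defs
begin

lemma exist_sol:
  fixes F :: "'n::{finite,wellorder} \<Rightarrow> (real, 'n) vec \<Rightarrow> real" and G :: "'n \<Rightarrow> real"
    and z :: "(real, 'n) vec"
  assumes dep: "\<And>i x2 x2'. (\<forall>j. j < i \<longrightarrow> x2 $ j = x2' $ j) \<Longrightarrow> F i x2 = F i x2'"
    and pos: "\<And>i. G i > 0"
  shows "\<exists>x2. \<forall>j\<le>i. z $ j = F j x2 + G j * x2 $ j"
proof (induction i rule: less_induct)
  case (less i)
  obtain x2 where x2: "\<forall>j<i. z $ j = F j x2 + G j * x2 $ j"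
  proof (cases "{..<i} = {}")
    case True then show ?thesis using that by auto
  next
    case False
    define p where "p = Max {..<i}"
    have pin: "p < i" using False unfolding p_def by (metis Max_in finite lessThan_iff)
    have le: "\<And>j. j < i \<Longrightarrow> j \<le> p" unfolding p_def by (simp add: Max_ge)
    from less[OF pin] obtain x where "\<forall>j\<le>p. z $ j = F j x + G j * x $ j" by blast
    then show ?thesis using that le by blast
  qed
  define x2' where "x2' = (\<chi> k. if k = i then (z $ i - F i x2) / G i else x2 $ k)"
  have agree: "\<And>j k. j \<le> k \<Longrightarrow> k < i \<Longrightarrow> x2' $ j = x2 $ j" unfolding x2'_def by auto
  have "\<forall>j\<le>i. z $ j = F j x2' + G j * x2' $ j"
  proof (intro allI impI)
    fix j assume "j \<le> i"
    show "z $ j = F j x2' + G j * x2' $ j"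
    proof (cases "j = i")
      case True
      have "F i x2' = F i x2" by (rule dep) (auto simp: x2'_def)
      then show ?thesis using True pos[of i] by (simp add: x2'_def field_simps)
    next
      case False
      then have ji: "j < i" using \<open>j \<le> i\<close> by simp
      have "F j x2' = F j x2" by (rule dep) (auto intro: agree[of _ j] ji)
      moreover have "x2' $ j = x2 $ j" using agree[of j j] ji by simp
      ultimately show ?thesis using x2 ji by simp
    qed
  qed
  then show ?case by blast
qed

lemma uniq_sol:
  fixes F :: "'n::{finite,wellorder} \<Rightarrow> (real, 'n) vec \<Rightarrow> real" and G :: "'n \<Rightarrow> real"
  assumes dep: "\<And>i x2 x2'. (\<forall>j. j < i \<longrightarrow> x2 $ j = x2' $ j) \<Longrightarrow> F i x2 = F i x2'"
    and pos: "\<And>i. G i > 0"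
    and eq: "\<And>i. F i a + G i * a $ i = F i b + G i * b $ i"
  shows "a = b"
proof -
  have "a $ i = b $ i" for i
  proof (induction i rule: less_induct)
    case (less i)
    then have "F i a = F i b" by (intro dep) auto
    then show ?case using eq[of i] pos[of i] by simp
  qed
  then show ?thesis by (simp add: vec_eq_iff)
qed

theorem proposition1:
  fixes f1 :: "'n::{finite,wellorder} \<Rightarrow> (real, 'n) vec \<Rightarrow> (real, 'm::finite) vec \<Rightarrow> (real, 'n) vec \<Rightarrow> real"
    and f2 :: "'n \<Rightarrow> (real, 'n) vec \<times> (real, 'n) vec \<Rightarrow> (real, 'm) vec \<Rightarrow> real set"
    and g :: "'n \<Rightarrow> (real, 'n) vec \<Rightarrow> (real, 'm) vec \<Rightarrow> real \<Rightarrow> real"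
    and \<delta> :: "'n \<Rightarrow> (real, 'n) vec \<times> (real, 'n) vec \<Rightarrow> (real, 'm) vec \<Rightarrow> (real, 'n) vec \<Rightarrow> real \<Rightarrow> real"
    and gm gM :: "'n \<Rightarrow> real"
  assumes "CARD('n) \<ge> 2"
    and "\<forall>i y u x2 x2'. (\<forall>j. j < i \<longrightarrow> x2 $ j = x2' $ j) \<longrightarrow> f1 i y u x2 = f1 i y u x2'"
    and "\<forall>i. continuous_on UNIV (\<lambda>(y, u, x2). f1 i y u x2)"
    and "\<forall>i. continuous_on UNIV (\<lambda>(y, u, t). g i y u t)"
    and "\<forall>i. 0 < gm i"
    and "\<forall>i y u t. gm i \<le> g i y u t \<and> g i y u t \<le> gM i"
    and "\<forall>i x u. f2 i x u \<noteq> {}"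
  shows "globally_strongly_observable (sys_rhs f1 f2 g \<delta>)"
proof -
  have gpos: "\<And>i y u t. g i y u t > 0" using assms(5,6) by (meson less_le_trans)
  have dep: "\<And>i y u x2 x2'. (\<forall>j. j < i \<longrightarrow> x2 $ j = x2' $ j) \<Longrightarrow> f1 i y u x2 = f1 i y u x2'"
    using assms(2) by blast
  define \<Phi> where "\<Phi> = (\<lambda>(x :: (real, 'n) vec \<times> (real, 'n) vec) (u :: (real, 'm) vec) (t::real).
     (fst x, (\<chi> i. f1 i (fst x) u (snd x) + g i (fst x) u t * (snd x $ i))))"
  have A: "\<forall>x u w t v. v \<in> sys_rhs f1 f2 g \<delta> x u w t \<longrightarrow> (fst x, fst v) = \<Phi> x u t"
    by (auto simp: sys_rhs_def \<Phi>_def vec_eq_iff)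
  have B: "bij (\<lambda>x. \<Phi> x u t)" for u t
  proof (rule bijI)
    show "inj (\<lambda>x. \<Phi> x u t)"
    proof (rule injI)
      fix a b assume h: "\<Phi> a u t = \<Phi> b u t"
      then have y: "fst a = fst b" by (simp add: \<Phi>_def case_prod_beta)
      have "snd a = snd b"
      proof (rule uniq_sol[where F = "\<lambda>i x2. f1 i (fst a) u x2" and G = "\<lambda>i. g i (fst a) u t"])
        show "\<And>i x2 x2'. \<forall>j<i. x2 $ j = x2' $ j \<Longrightarrow> f1 i (fst a) u x2 = f1 i (fst a) u x2'"
          by (rule dep) 
        show "\<And>i. 0 < g i (fst a) u t" by (rule gpos)
        fix i
        from h have "snd (\<Phi> a u t) $ i = snd (\<Phi> b u t) $ i" by simp
        then have "(\<chi> i. f1 i (fst a) u (snd a) + g i (fst a) u t * (snd a $ i)) $ i =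
           (\<chi> i. f1 i (fst b) u (snd b) + g i (fst b) u t * (snd b $ i)) $ i"
          by (simp only: \<Phi>_def case_prod_beta snd_conv)
        then show "f1 i (fst a) u (snd a) + g i (fst a) u t * snd a $ i =
               f1 i (fst a) u (snd b) + g i (fst a) u t * snd b $ i" using y by simp
      qed
      then show "a = b" using y by (simp add: prod_eq_iff)
    qed
  next
    show "surj (\<lambda>x. \<Phi> x u t)"
    unfolding surj_def
    proof
      fix p :: "(real, 'n) vec \<times> (real, 'n) vec"
      obtain x2 where x2: "\<forall>j\<le>Max UNIV. snd p $ j = f1 j (fst p) u x2 + g j (fst p) u t * x2 $ j"
        using exist_sol[where F = "\<lambda>i x2. f1 i (fst p) u x2" and G = "\<lambda>i. g i (fst p) u t"
            and z = "snd p" and i = "Max UNIV"] dep gpos by blast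
      have "\<forall>j. snd p $ j = f1 j (fst p) u x2 + g j (fst p) u t * x2 $ j"
        using x2 by (simp add: Max_ge)
      then have "\<Phi> (fst p, x2) u t = p" by (simp add: \<Phi>_def vec_eq_iff prod_eq_iff)
      then show "\<exists>x. p = \<Phi> x u t" by metis
    qed
  qed
  show ?thesis unfolding globally_strongly_observable_def using A B by blast
qed

end
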